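(* Let $R$ be a nontrivial tangible supersemifield, let $(q,b)$ be a quadratic pair on an $R$-module $V$, and let $x,y\in V$. (a) If $R$ is dense, then $q$ is quasilinear on $Rx+Ry$ if and only if $b(x,y)^2\le_\nu q(x)q(y)$. If this inequality fails, then $q$ is rigid at $(x,y)$. (b) If $R$ is discrete (with $\pi$ as in the context), then $q$ is quasilinear on $Rx+Ry$ if either $b(x,y)^2<_\nu \pi^{-1}q(x)q(y)$, or both $q(x),q(y)$ lie in $eR$ and $b(x,y)^2\cong_\nu \pi^{-1}q(x)q(y)$. If neither of these two conditions holds, then $q$ is $\nu$-rigid at $(x,y)$. If moreover $b(x,y)^2>_\nu \pi^{-1}q(x)q(y)$, then $q$ is rigid at $(x,y)$.
   Context: All semirings are commutative with $1$. A semiring $R$ is supertropical if $e:=1+1$ satisfies $e+e=e$ and, for all $x,y\in R$: if $ex\neq ey$ then $x+y\in\{x,y\}$, and if $ex=ey$ then $x+y=ey$. The ideal $eR$ is totally ordered by $u\le v\iff u+v=v$. For $x,y\in R$ write $x\le_\nu y$, $x\cong_\nu y$, $x<_\nu y$ for $ex\le ey$, $ex=ey$, $ex<ey$ respectively. Put $\mathcal T=R\setminus eR$ and $\mathcal G=eR\setminus\{0\}$. A tangible supersemifield is a supertropical semiring in which $\mathcal T$ is a group under multiplication, $\mathcal G$ is a group under multiplication (with identity $e$), and $e\mathcal T=\mathcal G$; it is nontrivial if $\mathcal G\neq\{e\}$. It is called discrete if $\mathcal G$ has a smallest element $c_0$ with $c_0>e$; then $\pi\in\mathcal T$ denotes an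 element with $e\pi^{-1}=c_0$. Otherwise it is called dense. A quadratic form on an $R$-module $V$ is a map $q:V\to R$ with $q(ax)=a^2q(x)$ for $a\in R,x\in V$, such that there is a symmetric bilinear form $b:V\times V\to R$ with $q(x+y)=q(x)+q(y)+b(x,y)$ for all $x,y\in V$; every such $b$ is a companion of $q$, and $(q,b)$ is a quadratic pair. $q$ is quasilinear on a submodule $W$ if $q(u+v)=q(u)+q(v)$ for all $u,v\in W$. $q$ is rigid at $(x,y)$ if $b_1(x,y)=b_2(x,y)$ for any two companions $b_1,b_2$ of $q$, and $\nu$-rigid at $(x,y)$ if $eb_1(x,y)=eb_2(x,y)$ for any two companions $b_1,b_2$. *)

theory Defs
  imports Main
begin

definition ee :: "'a::comm_semiring_1" where
  "ee = 1 + 1"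

definition eR :: "'a::comm_semiring_1 set" where
  "eR = range (\<lambda>r. ee * r)"

definition tang :: "'a::comm_semiring_1 set" where
  "tang = UNIV - eR"

definition ghost :: "'a::comm_semiring_1 set" where
  "ghost = eR - {0}"

definition supertropical :: "'a::comm_semiring_1 itself \<Rightarrow> bool" where
  "supertropical (T::'a itself) \<longleftrightarrow>
     (ee + ee = (ee::'a)) \<and>
     (\<forall>x y::'a. (ee * x \<noteq> ee * y \<longrightarrow> x + y \<in> {x, y}) \<and>
                (ee * x = ee * y \<longrightarrow> x + y = ee * y))"

definition ghost_le :: "'a::comm_semiring_1 \<Rightarrow> 'a \<Rightarrow> bool" where
  "ghost_le u v \<longleftrightarrow> u + v = v"

definition nu_le :: "'a::comm_semiring_1 \<Rightarrow> 'a \<Rightarrow> bool" where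
  "nu_le x y \<longleftrightarrow> ghost_le (ee * x) (ee * y)"

definition nu_eq :: "'a::comm_semiring_1 \<Rightarrow> 'a \<Rightarrow> bool" where
  "nu_eq x y \<longleftrightarrow> ee * x = ee * y"

definition nu_lt :: "'a::comm_semiring_1 \<Rightarrow> 'a \<Rightarrow> bool" where
  "nu_lt x y \<longleftrightarrow> ghost_le (ee * x) (ee * y) \<and> ee * x \<noteq> ee * y"

definition tangible_supersemifield :: "'a::comm_semiring_1 itself \<Rightarrow> bool" where
  "tangible_supersemifield (T::'a itself) \<longleftrightarrow>
     supertropical T \<and>
     \<comment> \<open>tangible elements form a multiplicative group (identity 1)\<close>
     (1::'a) \<in> tang \<and>
     (\<forall>s\<in>(tang::'a set). \<forall>t\<in>tang. s * t \<in> tang) \<and>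
     (\<forall>t\<in>(tang::'a set). \<exists>s\<in>tang. s * t = 1) \<and>
     \<comment> \<open>ghost elements form a multiplicative group with identity e\<close>
     (ee::'a) \<in> ghost \<and>
     (\<forall>g\<in>(ghost::'a set). \<forall>h\<in>ghost. g * h \<in> ghost) \<and>
     (\<forall>g\<in>(ghost::'a set). ee * g = g) \<and>
     (\<forall>g\<in>(ghost::'a set). \<exists>h\<in>ghost. g * h = ee) \<and>
     (\<lambda>t. ee * t) ` (tang::'a set) = ghost"

definition nontrivial_ssf :: "'a::comm_semiring_1 itself \<Rightarrow> bool" where
  "nontrivial_ssf (T::'a itself) \<longleftrightarrow> (ghost::'a set) \<noteq> {ee}"

definition least_above_e :: "'a::comm_semiring_1 \<Rightarrow> bool" where
  "least_above_e c0 \<longleftrightarrow> c0 \<in> ghost \<and> ghost_le ee c0 \<and> c0 \<noteq> ee \<and>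
     (\<forall>g\<in>ghost. ghost_le ee g \<and> g \<noteq> ee \<longrightarrow> ghost_le c0 g)"

definition discrete_ssf :: "'a::comm_semiring_1 itself \<Rightarrow> bool" where
  "discrete_ssf (T::'a itself) \<longleftrightarrow> (\<exists>c0::'a. least_above_e c0)"

definition dense_ssf :: "'a::comm_semiring_1 itself \<Rightarrow> bool" where
  "dense_ssf T \<longleftrightarrow> \<not> discrete_ssf T"

definition semimodule :: "('a::comm_semiring_1 \<Rightarrow> 'v::comm_monoid_add \<Rightarrow> 'v) \<Rightarrow> bool" where
  "semimodule smult \<longleftrightarrow>
     (\<forall>a u v. smult a (u + v) = smult a u + smult a v) \<and>
     (\<forall>a c v. smult (a + c) v = smult a v + smult c v) \<and>
     (\<forall>a c v. smult (a * c) v = smult a (smult c v)) \<and>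
     (\<forall>v. smult 1 v = v) \<and>
     (\<forall>v. smult 0 v = 0) \<and>
     (\<forall>a. smult a 0 = 0)"

definition symmetric_bilinear ::
  "('a::comm_semiring_1 \<Rightarrow> 'v::comm_monoid_add \<Rightarrow> 'v) \<Rightarrow> ('v \<Rightarrow> 'v \<Rightarrow> 'a) \<Rightarrow> bool" where
  "symmetric_bilinear smult b \<longleftrightarrow>
     (\<forall>u v. b u v = b v u) \<and>
     (\<forall>u u' v. b (u + u') v = b u v + b u' v) \<and>
     (\<forall>a u v. b (smult a u) v = a * b u v)"

definition companion ::
  "('a::comm_semiring_1 \<Rightarrow> 'v::comm_monoid_add \<Rightarrow> 'v) \<Rightarrow> ('v \<Rightarrow> 'a) \<Rightarrow> ('v \<Rightarrow> 'v \<Rightarrow> 'a) \<Rightarrow> bool" where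
  "companion smult q b \<longleftrightarrow> symmetric_bilinear smult b \<and>
     (\<forall>x y. q (x + y) = q x + q y + b x y)"

definition quadratic_form ::
  "('a::comm_semiring_1 \<Rightarrow> 'v::comm_monoid_add \<Rightarrow> 'v) \<Rightarrow> ('v \<Rightarrow> 'a) \<Rightarrow> bool" where
  "quadratic_form smult q \<longleftrightarrow> (\<forall>a x. q (smult a x) = a ^ 2 * q x) \<and> (\<exists>b. companion smult q b)"

definition quadratic_pair ::
  "('a::comm_semiring_1 \<Rightarrow> 'v::comm_monoid_add \<Rightarrow> 'v) \<Rightarrow> ('v \<Rightarrow> 'a) \<Rightarrow> ('v \<Rightarrow> 'v \<Rightarrow> 'a) \<Rightarrow> bool" where
  "quadratic_pair smult q b \<longleftrightarrow> quadratic_form smult q \<and> companion smult q b"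

definition span2 :: "('a::comm_semiring_1 \<Rightarrow> 'v::comm_monoid_add \<Rightarrow> 'v) \<Rightarrow> 'v \<Rightarrow> 'v \<Rightarrow> 'v set" where
  "span2 smult x y = {smult a x + smult c y | a c. True}"

definition quasilinear_on :: "('v::comm_monoid_add \<Rightarrow> 'a::comm_semiring_1) \<Rightarrow> 'v set \<Rightarrow> bool" where
  "quasilinear_on q W \<longleftrightarrow> (\<forall>u\<in>W. \<forall>v\<in>W. q (u + v) = q u + q v)"

definition rigid_at ::
  "('a::comm_semiring_1 \<Rightarrow> 'v::comm_monoid_add \<Rightarrow> 'v) \<Rightarrow> ('v \<Rightarrow> 'a) \<Rightarrow> 'v \<Rightarrow> 'v \<Rightarrow> bool" where
  "rigid_at smult q x y \<longleftrightarrow>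
     (\<forall>b1 b2. companion smult q b1 \<and> companion smult q b2 \<longrightarrow> b1 x y = b2 x y)"

definition nu_rigid_at ::
  "('a::comm_semiring_1 \<Rightarrow> 'v::comm_monoid_add \<Rightarrow> 'v) \<Rightarrow> ('v \<Rightarrow> 'a) \<Rightarrow> 'v \<Rightarrow> 'v \<Rightarrow> bool" where
  "nu_rigid_at smult q x y \<longleftrightarrow>
     (\<forall>b1 b2. companion smult q b1 \<and> companion smult q b2 \<longrightarrow> ee * b1 x y = ee * b2 x y)"

end

theory Submission
  imports Defs
begin


definition lt :: "'a::comm_semiring_1 \<Rightarrow> 'a \<Rightarrow> bool" where
  "lt u v \<longleftrightarrow> ghost_le u v \<and> u \<noteq> v"

locale tssf =
  fixes T :: "'a::comm_semiring_1 itself"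
  assumes R: "tangible_supersemifield T"
begin

lemma sup: "ee + ee = (ee::'a)"
  "\<And>x y::'a. ee * x \<noteq> ee * y \<Longrightarrow> x + y = x \<or> x + y = y"
  "\<And>x y::'a. ee * x = ee * y \<Longrightarrow> x + y = ee * y"
  using R unfolding tangible_supersemifield_def supertropical_def by auto

lemma grp: "(1::'a) \<in> tang"
  "\<And>s t::'a. s\<in>tang \<Longrightarrow> t\<in>tang \<Longrightarrow> s * t \<in> tang"
  "\<And>t::'a. t\<in>tang \<Longrightarrow> \<exists>s\<in>tang. s * t = 1"
  "(ee::'a) \<in> ghost"
  "\<And>g h::'a. g\<in>ghost \<Longrightarrow> h\<in>ghost \<Longrightarrow> g * h \<in> ghost"
  "\<And>g::'a. g\<in>ghost \<Longrightarrow> \<exists>h\<in>ghost. g * h = ee"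
  "(\<lambda>t. ee * t) ` (tang::'a set) = ghost"
  using R unfolding tangible_supersemifield_def by auto

lemma ee_idem: "ee * ee = (ee::'a)"
proof -
  have "ee * ee = ee * (1 + 1::'a)" by (simp add: ee_def)
  also have "\<dots> = ee + ee" by (simp only: distrib_left mult_1_right)
  finally show ?thesis using sup(1) by simp
qed

lemma eR_iff: "(x::'a) \<in> eR \<longleftrightarrow> ee * x = x"
proof
  assume "x \<in> eR" then obtain r where "x = ee * r" by (auto simp: eR_def)
  then show "ee * x = x" by (simp add: mult.assoc[symmetric] ee_idem)
next
  assume "ee * x = x" then show "x \<in> eR" unfolding eR_def by (metis rangeI)
qed

lemma N_eR[simp]: "ee * (x::'a) \<in> eR"
  unfolding eR_def by simp

lemma zero_eR[simp]: "(0::'a) \<in> eR" by (simp add: eR_iff)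

lemma eR_mult: "(u::'a) \<in> eR \<Longrightarrow> u * w \<in> eR"
  by (simp add: eR_iff mult.assoc[symmetric])

lemma eR_mult2: "(w::'a) \<in> eR \<Longrightarrow> u * w \<in> eR"
  using eR_mult[of w u] by (simp add: mult.commute)

lemma eR_add: "(u::'a) \<in> eR \<Longrightarrow> v \<in> eR \<Longrightarrow> u + v \<in> eR"
  by (simp add: eR_iff distrib_left)

lemma N_mult: "ee * ((x::'a) * y) = (ee * x) * (ee * y)"
proof -
  have "(ee * x) * (ee * y) = (ee * ee) * (x * y)" by (simp add: ac_simps)
  then show ?thesis by (simp add: ee_idem)
qed

lemma N_add: "ee * ((x::'a) + y) = ee * x + ee * y"
  by (simp add: distrib_left)

lemma ghost_iff: "(g::'a) \<in> ghost \<longleftrightarrow> g \<in> eR \<and> g \<noteq> 0"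
  by (simp add: ghost_def)

lemma N_zero: "ee * (x::'a) = 0 \<longleftrightarrow> x = 0"
proof
  assume h: "ee * x = 0"
  show "x = 0"
  proof (cases "x \<in> eR")
    case True then show ?thesis using h by (simp add: eR_iff)
  next
    case False then have "x \<in> tang" by (simp add: tang_def)
    then have "ee * x \<in> ghost" using grp(7) by blast
    then show ?thesis using h by (simp add: ghost_def)
  qed
qed simp

lemma N_ghost: "(x::'a) \<noteq> 0 \<Longrightarrow> ee * x \<in> ghost"
  using N_zero by (simp add: ghost_iff)

lemma ghost_mult_nz: "(u::'a) \<in> ghost \<Longrightarrow> v \<in> ghost \<Longrightarrow> u * v \<in> ghost"
  using grp(5) by blast

lemma ghost_inv: "(g::'a) \<in> ghost \<Longrightarrow> \<exists>h\<in>ghost. g * h = ee"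
  using grp(6) by blast

lemma eR_ee_mult: "(u::'a) \<in> eR \<Longrightarrow> u * ee = u"
  by (simp add: eR_iff mult.commute)

lemma cancel: "(u::'a) \<in> eR \<Longrightarrow> v \<in> eR \<Longrightarrow> g \<in> ghost \<Longrightarrow> u * g = v * g \<Longrightarrow> u = v"
proof -
  assume a: "u \<in> eR" "v \<in> eR" "g \<in> ghost" "u * g = v * g"
  obtain h where "g * h = ee" using ghost_inv a(3) by blast
  then have "u * g * h = u" "v * g * h = v" using a eR_ee_mult by (metis mult.assoc)+
  then show ?thesis using a(4) by metis
qed

lemma tang_N: "(g::'a) \<in> ghost \<Longrightarrow> \<exists>c s. ee * c = g \<and> s * c = 1"
proof -
  assume "g \<in> ghost"
  then obtain c where c: "c \<in> tang" "ee * c = g" using grp(7) by (metis imageE)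
  then obtain s where "s * c = 1" using grp(3) by blast
  then show ?thesis using c by blast
qed

lemma le_refl: "(u::'a) \<in> eR \<Longrightarrow> ghost_le u u"
  unfolding ghost_le_def using sup(3)[of u u] by (simp add: eR_iff)

lemma le_antisym: "ghost_le (u::'a) v \<Longrightarrow> ghost_le v u \<Longrightarrow> u = v"
  unfolding ghost_le_def by (metis add.commute)

lemma le_trans: "ghost_le (u::'a) v \<Longrightarrow> ghost_le v w \<Longrightarrow> ghost_le u w"
  unfolding ghost_le_def by (metis add.assoc)

lemma le_total: "(u::'a) \<in> eR \<Longrightarrow> v \<in> eR \<Longrightarrow> ghost_le u v \<or> ghost_le v u"
proof -
  assume a: "u \<in> eR" "v \<in> eR"
  show ?thesis
  proof (cases "u = v")
    case True then show ?thesis using le_refl a by simp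
  next
    case False
    then have "ee * u \<noteq> ee * v" using a by (simp add: eR_iff)
    then have "u + v = u \<or> u + v = v" using sup(2) by blast
    then show ?thesis unfolding ghost_le_def by (metis add.commute)
  qed
qed

lemma le_0: "ghost_le 0 (u::'a)" by (simp add: ghost_le_def)

lemma le_0_iff: "ghost_le (u::'a) 0 \<Longrightarrow> u = 0"
  by (simp add: ghost_le_def)

lemma le_mult: "ghost_le (u::'a) v \<Longrightarrow> ghost_le (u * w) (v * w)"
  unfolding ghost_le_def by (metis distrib_right)

lemma le_mult_left: "ghost_le (u::'a) v \<Longrightarrow> ghost_le (w * u) (w * v)"
  using le_mult by (metis mult.commute)

lemma term_le: "ghost_le (ee * (t::'a)) (ee * (t + r))"
proof -
  have "ee * t + ee * t = ee * t" using sup(3)[of "ee*t" "ee*t"]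
    by (simp add: mult.assoc[symmetric] ee_idem)
  then show ?thesis unfolding ghost_le_def N_add by (metis add.assoc)
qed

lemma lt_le_trans: "lt (u::'a) v \<Longrightarrow> ghost_le v w \<Longrightarrow> lt u w"
  unfolding lt_def using le_trans le_antisym by metis

lemma le_lt_trans: "ghost_le (u::'a) v \<Longrightarrow> lt v w \<Longrightarrow> lt u w"
  unfolding lt_def using le_trans le_antisym by metis

lemma not_le: "(u::'a) \<in> eR \<Longrightarrow> v \<in> eR \<Longrightarrow> \<not> ghost_le u v \<Longrightarrow> lt v u"
  unfolding lt_def using le_total le_refl by metis

lemma not_lt: "(u::'a) \<in> eR \<Longrightarrow> v \<in> eR \<Longrightarrow> \<not> lt u v \<Longrightarrow> ghost_le v u"
  unfolding lt_def using le_total le_refl by metis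

lemma lt_not_le: "lt (u::'a) v \<Longrightarrow> \<not> ghost_le v u"
  unfolding lt_def using le_antisym by metis

lemma lt_mult: "(u::'a) \<in> eR \<Longrightarrow> v \<in> eR \<Longrightarrow> g \<in> ghost \<Longrightarrow> lt u v \<Longrightarrow> lt (u * g) (v * g)"
  unfolding lt_def using le_mult cancel by metis

lemma lt_mult_left: "(u::'a) \<in> eR \<Longrightarrow> v \<in> eR \<Longrightarrow> g \<in> ghost \<Longrightarrow> lt u v \<Longrightarrow> lt (g * u) (g * v)"
  using lt_mult by (metis mult.commute)

lemma lt_cancel: "(u::'a) \<in> eR \<Longrightarrow> v \<in> eR \<Longrightarrow> g \<in> ghost \<Longrightarrow> lt (u * g) (v * g) \<Longrightarrow> lt u v"
  by (metis le_mult lt_not_le not_le)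

lemma le_cancel: "(u::'a) \<in> eR \<Longrightarrow> v \<in> eR \<Longrightarrow> g \<in> ghost \<Longrightarrow> ghost_le (u * g) (v * g) \<Longrightarrow> ghost_le u v"
  by (metis lt_mult lt_not_le not_le)

lemma lt_0: "(g::'a) \<in> ghost \<Longrightarrow> lt 0 g"
  unfolding lt_def ghost_def using le_0 by auto

lemma lt_nz: "lt (u::'a) v \<Longrightarrow> v \<noteq> 0"
  unfolding lt_def using le_0_iff by auto

lemma join_lt: "(u::'a) \<in> eR \<Longrightarrow> v \<in> eR \<Longrightarrow> lt u m \<Longrightarrow> lt v m \<Longrightarrow> lt (u + v) m"
  by (metis ghost_le_def le_total add.commute)

lemma absorb: "lt (ee * (B::'a)) (ee * S) \<or> (ghost_le (ee * B) (ee * S) \<and> S \<in> eR) \<Longrightarrow> S + B = S"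
proof -
  assume h: "lt (ee * B) (ee * S) \<or> (ghost_le (ee * B) (ee * S) \<and> S \<in> eR)"
  show ?thesis
  proof (cases "ee * S = ee * B")
    case True
    then have "S \<in> eR" using h unfolding lt_def by auto
    then show ?thesis using sup(3)[of S B] True by (metis eR_iff)
  next
    case False
    have le: "ghost_le (ee * B) (ee * S)" using h unfolding lt_def by auto
    have "S + B = S \<or> S + B = B" using sup(2) False by blast
    moreover have "S + B = B \<Longrightarrow> ghost_le (ee * S) (ee * B)"
      unfolding ghost_le_def by (metis N_add)
    ultimately show ?thesis using le le_antisym False by metis
  qed
qed

lemma N_sum_eq: "(ee * (x::'a)) + ee * y = ee * y \<Longrightarrow> ee * (x + y) = ee * y"
  by (simp add: N_add)

end


context tssf begin

lemma amgm:
  assumes "(u::'a) \<in> eR" "v \<in> eR" "w \<in> eR" "m \<in> eR"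
    "ghost_le u m" "ghost_le v m" "ghost_le (w*w) (u*v)"
  shows "ghost_le w m \<and> (w = m \<longrightarrow> u = m \<and> v = m)"
proof (cases "m = 0")
  case True
  then have "u = 0" "v = 0" using assms le_0_iff by auto
  then have "w * w = 0" using assms(7) le_0_iff by simp
  then have "w = 0" using assms(3) ghost_mult_nz by (metis ghost_iff)
  then show ?thesis using True \<open>u=0\<close> \<open>v=0\<close> le_0 by simp
next
  case False
  then have mg: "m \<in> ghost" using assms(4) ghost_iff by simp
  have p1: "ghost_le w m"
  proof (rule ccontr)
    assume "\<not> ghost_le w m"
    then have l: "lt m w" using not_le assms by blast
    then have "w \<noteq> 0" using lt_nz by blast
    then have wg: "w \<in> ghost" using assms ghost_iff by simp
    have a1: "lt (m*m) (w*m)" using lt_mult[OF assms(4,3) mg l] .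
    have a2: "ghost_le (w*m) (w*w)" using le_mult_left l unfolding lt_def by blast
    have a3: "ghost_le (u*v) (m*v)" using le_mult assms(5) by blast
    have a4: "ghost_le (m*v) (m*m)" using le_mult_left assms(6) by blast
    have "lt (m*m) (m*m)" using lt_le_trans[OF a1 le_trans[OF a2 le_trans[OF assms(7) le_trans[OF a3 a4]]]] .
    then show False unfolding lt_def by simp
  qed
  have p2: "u = m \<and> v = m" if "w = m"
  proof (rule ccontr)
    assume "\<not> (u = m \<and> v = m)"
    then consider "u \<noteq> m" | "v \<noteq> m" by blast
    then show False
    proof cases
      case 1
      then have l: "lt u m" using assms(5) unfolding lt_def by simp
      have a1: "lt (u*m) (m*m)" using lt_mult[OF assms(1,4) mg l] .
      have a2: "ghost_le (u*v) (u*m)" using le_mult_left assms(6) by blast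
      have "lt (m*m) (m*m)" using le_lt_trans[OF le_trans[OF assms(7) a2] a1] that by simp
      then show False unfolding lt_def by simp
    next
      case 2
      then have l: "lt v m" using assms(6) unfolding lt_def by simp
      have a1: "lt (m*v) (m*m)" using lt_mult_left[OF assms(2,4) mg l] .
      have a2: "ghost_le (u*v) (m*v)" using le_mult assms(5) by blast
      have "lt (m*m) (m*m)" using le_lt_trans[OF le_trans[OF assms(7) a2] a1] that by simp
      then show False unfolding lt_def by simp
    qed
  qed
  show ?thesis using p1 p2 by blast
qed

lemma c0_facts:
  assumes "least_above_e (c0::'a)"
  shows "c0 \<in> ghost" "lt ee c0"
proof -
  show "c0 \<in> ghost" using assms unfolding least_above_e_def by blast
  show "lt ee c0" using assms unfolding least_above_e_def lt_def by metis
qed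

lemma disc_step:
  assumes c0: "least_above_e (c0::'a)" and m: "m \<in> ghost" and w: "w \<in> eR" and l: "lt m w"
  shows "ghost_le (c0*m) w"
proof -
  obtain h where h: "h \<in> ghost" "m * h = ee" using ghost_inv m by blast
  have "w \<noteq> 0" using lt_nz l by blast
  then have wg: "w \<in> ghost" using w ghost_iff by simp
  have meR: "m \<in> eR" using m ghost_iff by simp
  have "lt (m*h) (w*h)" using lt_mult[OF meR w h(1) l] .
  then have l2: "lt ee (w*h)" using h by simp
  have whg: "w * h \<in> ghost" using ghost_mult_nz[OF wg h(1)] .
  have lc: "\<forall>g\<in>ghost. ghost_le ee g \<and> g \<noteq> ee \<longrightarrow> ghost_le c0 g"
    using c0 unfolding least_above_e_def by simp
  have "ghost_le c0 (w*h)" using lc whg l2 unfolding lt_def by metis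
  then have "ghost_le (c0*m) (w*h*m)" by (rule le_mult)
  moreover have "w*h*m = w*(m*h)" by (simp add: ac_simps)
  then have "w*h*m = w" using h w eR_ee_mult by simp
  ultimately show ?thesis by simp
qed

lemma amgm2:
  assumes c0: "least_above_e (c0::'a)"
    and ue: "(u::'a) \<in> eR" and ve: "v \<in> eR" and we: "w \<in> eR" and me: "m \<in> eR"
    and um: "ghost_le u m" and vm: "ghost_le v m" and eq: "w*w = c0*(u*v)"
  shows "ghost_le w m \<and> (w = m \<longrightarrow> u = m \<or> v = m)"
proof (cases "m = 0")
  case True
  then have "u = 0" "v = 0" using um vm le_0_iff by auto
  then have "w * w = 0" using eq by simp
  then have "w = 0" using we ghost_mult_nz by (metis ghost_iff)
  then show ?thesis using True \<open>u=0\<close> \<open>v=0\<close> le_0 by simp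
next
  case False
  then have mg: "m \<in> ghost" using me ghost_iff by simp
  have cg: "c0 \<in> ghost" "lt ee c0" using c0_facts[OF c0] by auto
  have ce: "c0 \<in> eR" using cg(1) ghost_iff by simp
  have mmg: "m*m \<in> ghost" using mg ghost_mult_nz by blast
  have mme: "m*m \<in> eR" using mmg ghost_iff by simp
  have p1: "ghost_le w m"
  proof (rule ccontr)
    assume "\<not> ghost_le w m"
    then have l: "lt m w" using not_le[OF we me] by blast
    have s: "ghost_le (c0*m) w" using disc_step[OF c0 mg we l] .
    have a1: "ghost_le (c0*m*(c0*m)) (w*(c0*m))" using le_mult[OF s] .
    have a2: "ghost_le (w*(c0*m)) (w*w)" using le_mult_left[OF s] .
    have a3: "ghost_le (u*v) (m*v)" using le_mult[OF um] .
    have a4: "ghost_le (m*v) (m*m)" using le_mult_left[OF vm] .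
    have a5: "ghost_le (c0*(u*v)) (c0*(m*m))" using le_mult_left[OF le_trans[OF a3 a4]] .
    have ee_e: "(ee::'a) \<in> eR" using N_eR[of "1::'a"] by simp
    have b1: "lt (ee*(m*m)) (c0*(m*m))" using lt_mult[OF ee_e ce mmg cg(2)] .
    have e1: "ee*(m*m) = m*m" using mme eR_iff by simp
    have b1': "lt (m*m) (c0*(m*m))" using b1 e1 by simp
    have cmm: "c0*(m*m) \<in> eR" using eR_mult2[OF mme] .
    have b2: "lt (c0*(m*m)) (c0*(c0*(m*m)))" using lt_mult_left[OF mme cmm cg(1) b1'] .
    have e2: "c0*(c0*(m*m)) = c0*m*(c0*m)" by (simp add: ac_simps)
    have "lt (c0*(m*m)) (c0*m*(c0*m))" using b2 e2 by simp
    then have "lt (c0*(m*m)) (w*w)" using lt_le_trans[OF _ le_trans[OF a1 a2]] by blast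
    then have "lt (c0*(m*m)) (c0*(u*v))" using eq by simp
    then have "lt (c0*(m*m)) (c0*(m*m))" using lt_le_trans[OF _ a5] by blast
    then show False unfolding lt_def by simp
  qed
  have p2: "u = m \<or> v = m" if wm: "w = m"
  proof (rule ccontr)
    assume "\<not> (u = m \<or> v = m)"
    then have lu: "lt u m" and lv: "lt v m" using um vm unfolding lt_def by auto
    have "u \<noteq> 0"
    proof
      assume "u = 0" then have "m*m = 0" using wm eq by simp
      then show False using mmg ghost_iff by simp
    qed
    then have ug: "u \<in> ghost" using ue ghost_iff by simp
    have s: "ghost_le (c0*u) m" using disc_step[OF c0 ug me lu] .
    have a1: "ghost_le (c0*u*v) (m*v)" using le_mult[OF s] .
    have a2: "lt (m*v) (m*m)" using lt_mult_left[OF ve me mg lv] .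
    have "m*m = c0*u*v" using wm eq by (simp add: ac_simps)
    then have "lt (m*m) (m*m)" using le_lt_trans[OF a1 a2] by simp
    then show False unfolding lt_def by simp
  qed
  show ?thesis using p1 p2 by blast
qed

lemma ghost1:
  assumes S: "S = t + R" and te: "(t::'a) \<in> eR" and eq: "ee*t = ee*S"
  shows "S \<in> eR"
proof -
  have "ghost_le (ee*R) (ee*(R + t))" by (rule term_le)
  then have "ghost_le (ee*R) (ee*t)" using S eq by (simp add: add.commute)
  then have "t + R = t" using absorb[of R t] te by blast
  then show ?thesis using S te by simp
qed

lemma ghost2:
  assumes S: "S = T1 + (T2 + R)" and e1: "ee*(T1::'a) = ee*S" and e2: "ee*T2 = ee*S"
  shows "S \<in> eR"
proof -
  have "ee*T1 = ee*T2" using e1 e2 by simp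
  then have a: "T1 + T2 = ee * T2" using sup(3) by blast
  have b: "S = (T1 + T2) + R" using S by (simp add: add.assoc)
  have c: "ee*(ee*T2) = ee*S" using e2 by (simp add: mult.assoc[symmetric] ee_idem)
  show ?thesis using ghost1[of S "T1+T2" R] a b c by simp
qed

lemma good_pair:
  assumes S: "S = T1 + (T2 + R)"
    and h: "ghost_le ((ee*(B::'a))*(ee*B)) ((ee*T1)*(ee*T2))"
  shows "S + B = S"
proof -
  have u: "ghost_le (ee*T1) (ee*S)" using term_le[of T1 "T2+R"] S by simp
  have "S = T2 + (T1 + R)" using S by (simp add: ac_simps)
  then have v: "ghost_le (ee*T2) (ee*S)" using term_le[of T2 "T1+R"] by simp
  have "ghost_le (ee*B) (ee*S) \<and> (ee*B = ee*S \<longrightarrow> ee*T1 = ee*S \<and> ee*T2 = ee*S)"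
    using amgm[OF N_eR N_eR N_eR N_eR u v h] .
  then have "lt (ee*B) (ee*S) \<or> (ghost_le (ee*B) (ee*S) \<and> S \<in> eR)"
    using ghost2[OF S] unfolding lt_def by blast
  then show ?thesis by (rule absorb)
qed

lemma good_pair2:
  assumes c0: "least_above_e (c0::'a)" and S: "S = T1 + (T2 + R)" and t1: "T1 \<in> eR" and t2: "T2 \<in> eR"
    and h: "(ee*(B::'a))*(ee*B) = c0*((ee*T1)*(ee*T2))"
  shows "S + B = S"
proof -
  have u: "ghost_le (ee*T1) (ee*S)" using term_le[of T1 "T2+R"] S by simp
  have S2: "S = T2 + (T1 + R)" using S by (simp add: ac_simps)
  then have v: "ghost_le (ee*T2) (ee*S)" using term_le[of T2 "T1+R"] by simp
  have "ghost_le (ee*B) (ee*S) \<and> (ee*B = ee*S \<longrightarrow> ee*T1 = ee*S \<or> ee*T2 = ee*S)"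
    using amgm2[OF c0 N_eR N_eR N_eR N_eR u v h] .
  moreover have "ee*T1 = ee*S \<Longrightarrow> S \<in> eR" using ghost1[OF S t1] by blast
  moreover have "ee*T2 = ee*S \<Longrightarrow> S \<in> eR" using ghost1[OF S2 t2] by blast
  ultimately have "lt (ee*B) (ee*S) \<or> (ghost_le (ee*B) (ee*S) \<and> S \<in> eR)"
    unfolding lt_def by blast
  then show ?thesis by (rule absorb)
qed

end


context tssf begin

lemma ee_eR: "(ee::'a) \<in> eR" using N_eR[of "1::'a"] by simp

lemma ghost_eR: "(g::'a) \<in> ghost \<Longrightarrow> g \<in> eR" by (simp add: ghost_iff)

lemma ghost_ee: "(g::'a) \<in> ghost \<Longrightarrow> ee * g = g" by (simp add: ghost_iff eR_iff)

lemma exists_gt_e: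
  assumes nt: "nontrivial_ssf T"
  shows "\<exists>h\<in>ghost. lt (ee::'a) h"
proof -
  have "(ghost::'a set) \<noteq> {ee}" using nt unfolding nontrivial_ssf_def by simp
  then obtain g where g: "(g::'a) \<in> ghost" "g \<noteq> ee" using grp(4) by blast
  show ?thesis
  proof (cases "ghost_le ee g")
    case True then have "lt ee g" using g unfolding lt_def by simp
    then show ?thesis using g(1) by blast
  next
    case False
    then have l: "lt g ee" using not_le[OF ee_eR ghost_eR[OF g(1)]] by blast
    obtain h where h: "h \<in> ghost" "g * h = ee" using ghost_inv g(1) by blast
    have "lt (g*h) (ee*h)" using lt_mult[OF ghost_eR[OF g(1)] ee_eR h(1) l] .
    then have "lt ee h" using h ghost_ee by simp
    then show ?thesis using h by blast
  qed
qed

lemma exists_lt_e: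
  assumes nt: "nontrivial_ssf T"
  shows "\<exists>h\<in>ghost. lt h (ee::'a)"
proof -
  obtain g where g: "(g::'a) \<in> ghost" "lt ee g" using exists_gt_e[OF nt] by blast
  obtain h where h: "h \<in> ghost" "g * h = ee" using ghost_inv g(1) by blast
  have "lt (ee*h) (g*h)" using lt_mult[OF ee_eR ghost_eR[OF g(1)] h(1) g(2)] .
  then have "lt h ee" using h ghost_ee by simp
  then show ?thesis using h by blast
qed

lemma dense_between:
  assumes d: "dense_ssf T" and u: "(u::'a) \<in> ghost" and v: "v \<in> ghost" and l: "lt u v"
  shows "\<exists>w\<in>ghost. lt u w \<and> lt w v"
proof -
  obtain k where k: "k \<in> ghost" "u * k = ee" using ghost_inv u by blast
  have zg: "v * k \<in> ghost" using ghost_mult_nz[OF v k(1)] .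
  have "lt (u*k) (v*k)" using lt_mult[OF ghost_eR[OF u] ghost_eR[OF v] k(1) l] .
  then have lz: "lt ee (v*k)" using k by simp
  have "\<not> least_above_e (v*k)" using d unfolding dense_ssf_def discrete_ssf_def by blast
  then have "\<not> (\<forall>g\<in>ghost. ghost_le ee g \<and> g \<noteq> ee \<longrightarrow> ghost_le (v*k) g)"
    using zg lz unfolding least_above_e_def lt_def by metis
  then obtain g where g: "g \<in> ghost" "ghost_le ee g" "g \<noteq> ee" "\<not> ghost_le (v*k) g"
    by blast
  have lg: "lt g (v*k)" using not_le[OF ghost_eR[OF zg] ghost_eR[OF g(1)] g(4)] .
  have gl: "lt ee g" using g(2,3) unfolding lt_def by simp
  have "lt (ee*u) (g*u)" using lt_mult[OF ee_eR ghost_eR[OF g(1)] u gl] .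
  then have a1: "lt u (g*u)" using ghost_ee[OF u] by simp
  have "lt (g*u) (v*k*u)" using lt_mult[OF ghost_eR[OF g(1)] ghost_eR[OF zg] u lg] .
  moreover have "v*k*u = v*(u*k)" by (simp add: ac_simps)
  then have "v*k*u = v" using k ghost_eR[OF v] eR_ee_mult by simp
  ultimately have a2: "lt (g*u) v" by simp
  show ?thesis using a1 a2 ghost_mult_nz[OF g(1) u] by blast
qed

end


context tssf begin

lemma choose_w:
  assumes gg: "(g::'a) \<in> ghost" and ae: "a \<in> eR" and be: "bb \<in> eR" and nt: "nontrivial_ssf T"
    and H: "(dense_ssf T \<and> lt (a*bb) (g*g)) \<or> (least_above_e c0 \<and> lt (c0*(a*bb)) (g*g))"
  shows "\<exists>w\<in>ghost. lt a (w*g) \<and> lt (w*bb) g"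
proof (cases "a = 0")
  case a0: True
  show ?thesis
  proof (cases "bb = 0")
    case True
    have "lt a (ee*g)" "lt (ee*bb) g" using a0 True lt_0[OF gg] ghost_ee[OF gg] by auto
    then show ?thesis using grp(4) by blast
  next
    case False
    then have bg: "bb \<in> ghost" using be ghost_iff by simp
    obtain kb where kb: "kb \<in> ghost" "bb * kb = ee" using ghost_inv bg by blast
    obtain h where h: "(h::'a) \<in> ghost" "lt h ee" using exists_lt_e[OF nt] by blast
    define w where "w = g*kb*h"
    have wg: "w \<in> ghost" unfolding w_def using ghost_mult_nz gg kb(1) h(1) by blast
    have "lt 0 (w*g)" using lt_0 ghost_mult_nz[OF wg gg] by blast
    then have l1: "lt a (w*g)" using a0 by simp
    have "w*bb = g*h*(bb*kb)" unfolding w_def by (simp add: ac_simps)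
    also have "\<dots> = g*h" using kb(2) eR_ee_mult ghost_eR ghost_mult_nz gg h(1) by metis
    finally have e: "w*bb = g*h" .
    have "lt (h*g) (ee*g)" using lt_mult[OF ghost_eR[OF h(1)] ee_eR gg h(2)] .
    then have "lt (w*bb) g" using e ghost_ee[OF gg] by (simp add: mult.commute)
    then show ?thesis using wg l1 by blast
  qed
next
  case an: False
  then have ag: "a \<in> ghost" using ae ghost_iff by simp
  obtain k where k: "k \<in> ghost" "g * k = ee" using ghost_inv gg by blast
  have akg: "a*k*g = a" using k(2) eR_ee_mult ae by (metis mult.assoc mult.commute)
  show ?thesis
  proof (cases "bb = 0")
    case True
    obtain h where h: "(h::'a) \<in> ghost" "lt ee h" using exists_gt_e[OF nt] by blast
    define w where "w = a*k*h"
    have wg: "w \<in> ghost" unfolding w_def using ghost_mult_nz ag k(1) h(1) by blast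
    have "w*g = a*k*g*h" unfolding w_def by (simp add: ac_simps)
    then have e: "w*g = h*a" using akg by (simp add: mult.commute)
    have "lt (ee*a) (h*a)" using lt_mult[OF ee_eR ghost_eR[OF h(1)] ag h(2)] .
    then have l1: "lt a (w*g)" using e ghost_ee[OF ag] by simp
    have l2: "lt (w*bb) g" using True lt_0[OF gg] by simp
    show ?thesis using wg l1 l2 by blast
  next
    case bn: False
    then have bg: "bb \<in> ghost" using be ghost_iff by simp
    obtain kb where kb: "kb \<in> ghost" "bb * kb = ee" using ghost_inv bg by blast
    from H show ?thesis
    proof
      assume "dense_ssf T \<and> lt (a*bb) (g*g)"
      then have d: "dense_ssf T" and l: "lt (a*bb) (g*g)" by auto
      have kkb: "k*kb \<in> ghost" using ghost_mult_nz k(1) kb(1) by blast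
      have "lt (a*bb*(k*kb)) (g*g*(k*kb))"
        using lt_mult[OF eR_mult[OF ae] eR_mult[OF ghost_eR[OF gg]] kkb l] .
      moreover have "a*bb*(k*kb) = a*k*(bb*kb)" by (simp add: ac_simps)
      moreover have "a*k*(bb*kb) = a*k" using kb(2) eR_ee_mult eR_mult[OF ae] by metis
      moreover have "g*g*(k*kb) = g*kb*(g*k)" by (simp add: ac_simps)
      moreover have "g*kb*(g*k) = g*kb" using k(2) eR_ee_mult eR_mult[OF ghost_eR[OF gg]] by metis
      ultimately have l2: "lt (a*k) (g*kb)" by simp
      obtain w where w: "w \<in> ghost" "lt (a*k) w" "lt w (g*kb)"
        using dense_between[OF d ghost_mult_nz[OF ag k(1)] ghost_mult_nz[OF gg kb(1)] l2] by blast
      have "lt (a*k*g) (w*g)" using lt_mult[OF eR_mult[OF ae] ghost_eR[OF w(1)] gg w(2)] .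
      then have l3: "lt a (w*g)" using akg by simp
      have "lt (w*bb) (g*kb*bb)" using lt_mult[OF ghost_eR[OF w(1)] eR_mult[OF ghost_eR[OF gg]] bg w(3)] .
      moreover have "g*kb*bb = g*(bb*kb)" by (simp add: ac_simps)
      moreover have "g*(bb*kb) = g" using kb(2) eR_ee_mult ghost_eR[OF gg] by metis
      ultimately have l4: "lt (w*bb) g" by simp
      show ?thesis using w(1) l3 l4 by blast
    next
      assume "least_above_e c0 \<and> lt (c0*(a*bb)) (g*g)"
      then have c0: "least_above_e c0" and l: "lt (c0*(a*bb)) (g*g)" by auto
      have cg: "c0 \<in> ghost" "lt ee c0" using c0_facts[OF c0] by auto
      define w where "w = a*k*c0"
      have wg: "w \<in> ghost" unfolding w_def using ghost_mult_nz ag k(1) cg(1) by blast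
      have "w*g = a*k*g*c0" unfolding w_def by (simp add: ac_simps)
      then have e: "w*g = c0*a" using akg by (simp add: mult.commute)
      have "lt (ee*a) (c0*a)" using lt_mult[OF ee_eR ghost_eR[OF cg(1)] ag cg(2)] .
      then have l1: "lt a (w*g)" using e ghost_ee[OF ag] by simp
      have "w*bb*g = c0*(a*bb)*(g*k)" unfolding w_def by (simp add: ac_simps)
      also have "\<dots> = c0*(a*bb)" using k(2) eR_ee_mult eR_mult2[OF eR_mult[OF ae]] by metis
      finally have "lt (w*bb*g) (g*g)" using l by simp
      then have l2: "lt (w*bb) g"
        using lt_cancel[OF eR_mult[OF ghost_eR[OF wg]] ghost_eR[OF gg] gg] by blast
      show ?thesis using wg l1 l2 by blast
    qed
  qed
qed

lemma choose_c:
  assumes gg: "ee*(\<gamma>::'a) \<in> ghost" and wg: "w \<in> ghost"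
    and l1: "lt (ee*\<alpha>) (w*(ee*\<gamma>))" and l2: "lt (w*(ee*\<beta>)) (ee*\<gamma>)"
  shows "\<exists>c s. s*c = 1 \<and> ee*c = w \<and> lt (ee*\<alpha>) (ee*(c*\<gamma>)) \<and> lt (ee*(c^2*\<beta>)) (ee*(c*\<gamma>))"
proof -
  obtain c s where cs: "ee*c = w" "s*c = 1" using tang_N[OF wg] by blast
  have e1: "ee*(c*\<gamma>) = w*(ee*\<gamma>)" using N_mult cs(1) by simp
  have "ee*(c^2*\<beta>) = ee*(c*(c*\<beta>))" by (simp add: power2_eq_square mult.assoc)
  also have "\<dots> = (ee*c)*(ee*(c*\<beta>))" by (rule N_mult)
  also have "\<dots> = (ee*c)*((ee*c)*(ee*\<beta>))" using N_mult[of c \<beta>] by simp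
  finally have e2: "ee*(c^2*\<beta>) = w*(w*(ee*\<beta>))" using cs(1) by simp
  have "lt (w*(w*(ee*\<beta>))) (w*(ee*\<gamma>))" using lt_mult_left[OF eR_mult2[OF N_eR] N_eR wg l2] .
  then show ?thesis using cs e1 e2 l1 by auto
qed

lemma core_val:
  assumes l1: "lt (ee*(\<alpha>::'a)) (ee*(c*\<gamma>))" and l2: "lt (ee*(c^2*\<beta>)) (ee*(c*\<gamma>))"
  shows "\<alpha> + c^2*\<beta> + c*\<gamma> = c*\<gamma>" and "lt (ee*(\<alpha> + c^2*\<beta>)) (ee*(c*\<gamma>))"
proof -
  show l: "lt (ee*(\<alpha> + c^2*\<beta>)) (ee*(c*\<gamma>))" using join_lt[OF N_eR N_eR l1 l2] N_add by simp
  have "c*\<gamma> + (\<alpha> + c^2*\<beta>) = c*\<gamma>" using absorb l by blast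
  then show "\<alpha> + c^2*\<beta> + c*\<gamma> = c*\<gamma>" by (simp add: add.commute)
qed

lemma rigid_core:
  assumes sc: "s*c = (1::'a)" and l1: "lt (ee*\<alpha>) (ee*(c*\<gamma>))" and l2: "lt (ee*(c^2*\<beta>)) (ee*(c*\<gamma>))"
    and eq: "\<alpha> + c^2*\<beta> + c*\<gamma> = \<alpha> + c^2*\<beta> + c*\<gamma>'"
  shows "\<gamma>' = \<gamma>"
proof -
  define S0 where "S0 = \<alpha> + c^2*\<beta>"
  have v: "S0 + c*\<gamma> = c*\<gamma>" "lt (ee*S0) (ee*(c*\<gamma>))" using core_val[OF l1 l2] unfolding S0_def by auto
  have r: "S0 + c*\<gamma>' = c*\<gamma>" using eq v(1) unfolding S0_def by simp
  have "lt (ee*S0) (ee*(c*\<gamma>'))"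
  proof (rule ccontr)
    assume "\<not> lt (ee*S0) (ee*(c*\<gamma>'))"
    then have "ghost_le (ee*(c*\<gamma>')) (ee*S0)" using not_lt[OF N_eR N_eR] by blast
    then have "ee*(S0 + c*\<gamma>') = ee*S0" unfolding ghost_le_def N_add by (simp add: add.commute)
    then show False using r v(2) unfolding lt_def by simp
  qed
  then have "c*\<gamma>' + S0 = c*\<gamma>'" using absorb by blast
  then have "c*\<gamma>' = c*\<gamma>" using r by (simp add: add.commute)
  then have "s*c*\<gamma>' = s*c*\<gamma>" by (simp add: mult.assoc)
  then show ?thesis using sc by simp
qed

lemma nq_core:
  assumes l1: "lt (ee*(\<alpha>::'a)) (ee*(c*\<gamma>))" and l2: "lt (ee*(c^2*\<beta>)) (ee*(c*\<gamma>))"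
  shows "\<alpha> + c^2*\<beta> + c*\<gamma> \<noteq> \<alpha> + c^2*\<beta>"
  using core_val[OF l1 l2] unfolding lt_def by auto

end


context tssf begin

lemma nu_core:
  assumes c0: "least_above_e c0" and an: "(\<alpha>::'a) \<notin> eR"
    and eq: "(ee*\<gamma>)*(ee*\<gamma>) = c0*((ee*\<alpha>)*(ee*\<beta>))"
    and F: "\<forall>c. \<alpha> + c^2*\<beta> + c*\<gamma> = \<alpha> + c^2*\<beta> + c*\<gamma>'"
  shows "ee*\<gamma>' = ee*\<gamma>"
proof -
  have cg: "c0 \<in> ghost" "lt ee c0" using c0_facts[OF c0] by auto
  have "\<alpha> \<noteq> 0" using an by auto
  then have ag: "ee*\<alpha> \<in> ghost" using N_ghost by blast
  show ?thesis
  proof (cases "\<gamma> = 0")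
    case g0: True
    have b0: "\<beta> = 0"
    proof (rule ccontr)
      assume "\<beta> \<noteq> 0"
      then have "ee*\<beta> \<in> ghost" using N_ghost by blast
      then have "c0*((ee*\<alpha>)*(ee*\<beta>)) \<in> ghost" using ghost_mult_nz cg(1) ag by blast
      then show False using eq g0 ghost_iff by simp
    qed
    show ?thesis
    proof (rule ccontr)
      assume ne: "ee*\<gamma>' \<noteq> ee*\<gamma>"
      then have "\<gamma>' \<noteq> 0" using g0 by auto
      then have g'g: "ee*\<gamma>' \<in> ghost" using N_ghost by blast
      obtain k where k: "k \<in> ghost" "ee*\<gamma>' * k = ee" using ghost_inv g'g by blast
      have wg: "ee*\<alpha>*k \<in> ghost" using ghost_mult_nz ag k(1) by blast
      obtain c s where cs: "ee*c = ee*\<alpha>*k" using tang_N[OF wg] by blast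
      have "ee*(c*\<gamma>') = (ee*c)*(ee*\<gamma>')" by (rule N_mult)
      also have "\<dots> = ee*\<alpha>*(ee*\<gamma>'*k)" using cs by (simp add: ac_simps)
      finally have "ee*(c*\<gamma>') = ee*\<alpha>*(ee*\<gamma>'*k)" .
      then have e1: "ee*(c*\<gamma>') = ee*\<alpha>" using k(2) eR_ee_mult[OF N_eR] by simp
      have "\<alpha> = \<alpha> + c*\<gamma>'" using F[rule_format, of c] g0 b0 by simp
      also have "\<dots> = ee*(c*\<gamma>')" using sup(3)[of \<alpha> "c*\<gamma>'"] e1 by simp
      finally show False using an by simp
    qed
  next
    case gn: False
    then have gg: "ee*\<gamma> \<in> ghost" using N_ghost by blast
    have ggg: "(ee*\<gamma>)*(ee*\<gamma>) \<in> ghost" using ghost_mult_nz gg by blast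
    have "\<beta> \<noteq> 0"
    proof
      assume "\<beta> = 0" then show False using eq ggg ghost_iff by simp
    qed
    then have bg: "ee*\<beta> \<in> ghost" using N_ghost by blast
    obtain k where k: "k \<in> ghost" "ee*\<gamma> * k = ee" using ghost_inv gg by blast
    define w where "w = ee*\<alpha>*k"
    have wg: "w \<in> ghost" unfolding w_def using ghost_mult_nz ag k(1) by blast
    obtain c s where cs: "ee*c = w" using tang_N[OF wg] by blast
    have "ee*(c*\<gamma>) = (ee*c)*(ee*\<gamma>)" by (rule N_mult)
    also have "\<dots> = ee*\<alpha>*(ee*\<gamma>*k)" using cs unfolding w_def by (simp add: ac_simps)
    finally have "ee*(c*\<gamma>) = ee*\<alpha>*(ee*\<gamma>*k)" .
    then have e1: "ee*(c*\<gamma>) = ee*\<alpha>" using k(2) eR_ee_mult[OF N_eR] by simp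
    have "ee*(c^2*\<beta>) = ee*(c*(c*\<beta>))" by (simp add: power2_eq_square mult.assoc)
    also have "\<dots> = (ee*c)*(ee*(c*\<beta>))" by (rule N_mult)
    also have "\<dots> = (ee*c)*((ee*c)*(ee*\<beta>))" using N_mult[of c \<beta>] by simp
    finally have e2: "ee*(c^2*\<beta>) = w*(w*(ee*\<beta>))" using cs by simp
    define X where "X = ee*\<alpha>*(ee*\<alpha>)*(ee*\<beta>)"
    have Xg: "X \<in> ghost" unfolding X_def using ghost_mult_nz ag bg by blast
    have "lt (ee*X) (c0*X)" using lt_mult[OF ee_eR ghost_eR[OF cg(1)] Xg cg(2)] by (simp add: mult.commute)
    then have lX: "lt X (c0*X)" using ghost_ee[OF Xg] by simp
    have "w*(w*(ee*\<beta>))*((ee*\<gamma>)*(ee*\<gamma>)) = X*((ee*\<gamma>*k)*(ee*\<gamma>*k))"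
      unfolding w_def X_def by (simp add: ac_simps)
    also have "\<dots> = X" using k(2) ghost_eR[OF Xg] eR_ee_mult ee_idem by simp
    finally have e3: "w*(w*(ee*\<beta>))*((ee*\<gamma>)*(ee*\<gamma>)) = X" .
    have e4: "ee*\<alpha>*((ee*\<gamma>)*(ee*\<gamma>)) = c0*X" unfolding eq X_def by (simp add: ac_simps)
    have "lt (w*(w*(ee*\<beta>))*((ee*\<gamma>)*(ee*\<gamma>))) (ee*\<alpha>*((ee*\<gamma>)*(ee*\<gamma>)))"
      using lX e3 e4 by simp
    then have l2: "lt (ee*(c^2*\<beta>)) (ee*\<alpha>)"
      using lt_cancel[OF _ N_eR ggg] e2 eR_mult2[OF eR_mult2[OF ghost_eR[OF bg]]] by metis
    have ab: "\<alpha> + c^2*\<beta> = \<alpha>" using absorb l2 by blast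
    have lhs: "\<alpha> + c^2*\<beta> + c*\<gamma> = ee*(c*\<gamma>)" using ab sup(3)[of \<alpha> "c*\<gamma>"] e1 by simp
    have rhs: "\<alpha> + c^2*\<beta> + c*\<gamma>' = \<alpha> + c*\<gamma>'" using ab by simp
    have E: "\<alpha> + c*\<gamma>' = ee*(c*\<gamma>)" using F lhs rhs by metis
    consider "ee*(c*\<gamma>') = ee*\<alpha>" | "lt (ee*(c*\<gamma>')) (ee*\<alpha>)" | "lt (ee*\<alpha>) (ee*(c*\<gamma>'))"
      using not_lt[OF N_eR N_eR] unfolding lt_def by metis
    then show ?thesis
    proof cases
      case 1
      then have "(ee*\<gamma>')*w = (ee*\<gamma>)*w" using e1 N_mult cs by (simp add: mult.commute)
      then show ?thesis using cancel[OF N_eR N_eR wg] by blast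
    next
      case 2
      then have "\<alpha> + c*\<gamma>' = \<alpha>" using absorb by blast
      then have "\<alpha> = ee*(c*\<gamma>)" using E by simp
      then show ?thesis using an by simp
    next
      case 3
      then have "c*\<gamma>' + \<alpha> = c*\<gamma>'" using absorb by blast
      then have "ee*(c*\<gamma>') = ee*(ee*(c*\<gamma>))" using E by (simp add: add.commute)
      then have "ee*(c*\<gamma>') = ee*\<alpha>" using e1 by (simp add: mult.assoc[symmetric] ee_idem)
      then show ?thesis using 3 unfolding lt_def by simp
    qed
  qed
qed

lemma step_H1:
  assumes "S = T1 + (T2 + R)" "B*B = p*x" "T1*T2 = p*y" "ghost_le (ee*x) (ee*(y::'a))"
  shows "S + B = S"
proof -
  have "(ee*B)*(ee*B) = (ee*p)*(ee*x)" using N_mult assms(2) by metis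
  moreover have "(ee*T1)*(ee*T2) = (ee*p)*(ee*y)" using N_mult assms(3) by metis
  ultimately have "ghost_le ((ee*B)*(ee*B)) ((ee*T1)*(ee*T2))" using le_mult_left[OF assms(4)] by simp
  then show ?thesis using good_pair[OF assms(1)] by blast
qed

lemma step_H2:
  assumes c0: "least_above_e c0" and "S = T1 + (T2 + R)" "T1 \<in> eR" "T2 \<in> eR"
    "B*B = p*x" "T1*T2 = p*y" "ee*x = c0*(ee*(y::'a))"
  shows "S + B = S"
proof -
  have "(ee*B)*(ee*B) = (ee*p)*(ee*x)" using N_mult assms(5) by metis
  moreover have "(ee*T1)*(ee*T2) = (ee*p)*(ee*y)" using N_mult assms(6) by metis
  ultimately have "(ee*B)*(ee*B) = c0*((ee*T1)*(ee*T2))" using assms(7) by (simp add: ac_simps)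
  then show ?thesis using good_pair2[OF c0 assms(2,3,4)] by blast
qed

lemma sq_le: "ghost_le (ee*(x::'a)) (ee*y) \<Longrightarrow> ghost_le (ee*(x*x)) (ee*(y*y))"
proof -
  assume h: "ghost_le (ee*x) (ee*y)"
  have "ghost_le ((ee*x)*(ee*x)) ((ee*y)*(ee*x))" using le_mult[OF h] .
  moreover have "ghost_le ((ee*y)*(ee*x)) ((ee*y)*(ee*y))" using le_mult_left[OF h] .
  ultimately show ?thesis using le_trans N_mult by metis
qed

end


context tssf begin

lemma ql_core:
  assumes hx: "ghost_le (ee*bxx) (ee*(\<alpha>::'a))" and hy: "ghost_le (ee*byy) (ee*\<beta>)"
    and H: "ghost_le (ee*(\<gamma>*\<gamma>)) (ee*(\<alpha>*\<beta>)) \<or>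
            (least_above_e c0 \<and> \<alpha> \<in> eR \<and> \<beta> \<in> eR \<and> ee*(\<gamma>*\<gamma>) = c0*(ee*(\<alpha>*\<beta>)))"
  shows "(a^2*\<alpha> + c^2*\<beta> + a*c*\<gamma>) + (a'^2*\<alpha> + c'^2*\<beta> + a'*c'*\<gamma>)
          + (a*a'*bxx + a*c'*\<gamma> + c*a'*\<gamma> + c*c'*byy)
       = (a^2*\<alpha> + c^2*\<beta> + a*c*\<gamma>) + (a'^2*\<alpha> + c'^2*\<beta> + a'*c'*\<gamma>)"
proof -
  define S where "S = (a^2*\<alpha> + c^2*\<beta> + a*c*\<gamma>) + (a'^2*\<alpha> + c'^2*\<beta> + a'*c'*\<gamma>)"
  have s1: "S + a*a'*bxx = S"
    apply (rule step_H1[of S "a^2*\<alpha>" "a'^2*\<alpha>" "c^2*\<beta> + a*c*\<gamma> + c'^2*\<beta> + a'*c'*\<gamma>" _ "a*a*(a'*a')" "bxx*bxx" "\<alpha>*\<alpha>"])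
    unfolding S_def by (simp_all add: ac_simps power2_eq_square sq_le[OF hx])
  have s4: "S + c*c'*byy = S"
    apply (rule step_H1[of S "c^2*\<beta>" "c'^2*\<beta>" "a^2*\<alpha> + a*c*\<gamma> + a'^2*\<alpha> + a'*c'*\<gamma>" _ "c*c*(c'*c')" "byy*byy" "\<beta>*\<beta>"])
    unfolding S_def by (simp_all add: ac_simps power2_eq_square sq_le[OF hy])
  have s2: "S + a*c'*\<gamma> = S" and s3: "S + c*a'*\<gamma> = S"
    using H
  proof -
    from H consider (h1) "ghost_le (ee*(\<gamma>*\<gamma>)) (ee*(\<alpha>*\<beta>))"
      | (h2) "least_above_e c0" "\<alpha> \<in> eR" "\<beta> \<in> eR" "ee*(\<gamma>*\<gamma>) = c0*(ee*(\<alpha>*\<beta>))" by blast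
    then have "S + a*c'*\<gamma> = S \<and> S + c*a'*\<gamma> = S"
    proof cases
      case h1
      have "S + a*c'*\<gamma> = S"
        apply (rule step_H1[of S "a^2*\<alpha>" "c'^2*\<beta>" "c^2*\<beta> + a*c*\<gamma> + a'^2*\<alpha> + a'*c'*\<gamma>" _ "a*a*(c'*c')" "\<gamma>*\<gamma>" "\<alpha>*\<beta>"])
        unfolding S_def using h1 by (simp_all add: ac_simps power2_eq_square)
      moreover have "S + c*a'*\<gamma> = S"
        apply (rule step_H1[of S "a'^2*\<alpha>" "c^2*\<beta>" "a^2*\<alpha> + a*c*\<gamma> + c'^2*\<beta> + a'*c'*\<gamma>" _ "a'*a'*(c*c)" "\<gamma>*\<gamma>" "\<alpha>*\<beta>"])
        unfolding S_def using h1 by (simp_all add: ac_simps power2_eq_square)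
      ultimately show ?thesis by blast
    next
      case h2
      have "S + a*c'*\<gamma> = S"
        apply (rule step_H2[OF h2(1), of S "a^2*\<alpha>" "c'^2*\<beta>" "c^2*\<beta> + a*c*\<gamma> + a'^2*\<alpha> + a'*c'*\<gamma>" _ "a*a*(c'*c')" "\<gamma>*\<gamma>" "\<alpha>*\<beta>"])
        unfolding S_def using h2 eR_mult2 by (simp_all add: ac_simps power2_eq_square)
      moreover have "S + c*a'*\<gamma> = S"
        apply (rule step_H2[OF h2(1), of S "a'^2*\<alpha>" "c^2*\<beta>" "a^2*\<alpha> + a*c*\<gamma> + c'^2*\<beta> + a'*c'*\<gamma>" _ "a'*a'*(c*c)" "\<gamma>*\<gamma>" "\<alpha>*\<beta>"])
        unfolding S_def using h2 eR_mult2 by (simp_all add: ac_simps power2_eq_square)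
      ultimately show ?thesis by blast
    qed
    then show "S + a*c'*\<gamma> = S" "S + c*a'*\<gamma> = S" by auto
  qed
  have "S + (a*a'*bxx + a*c'*\<gamma> + c*a'*\<gamma> + c*c'*byy) = (((S + a*a'*bxx) + a*c'*\<gamma>) + c*a'*\<gamma>) + c*c'*byy"
    by (simp add: add.assoc)
  also have "\<dots> = S" using s1 s2 s3 s4 by simp
  finally show ?thesis unfolding S_def .
qed

end



lemma q_lin:
  assumes C: "companion smult q b'" and Q: "\<forall>a x. q (smult a x) = a^2 * q x"
  shows "q (smult a x + smult c y) = a^2*q x + c^2*q y + a*c*b' x y"
proof -
  from C have sb: "symmetric_bilinear smult b'" and add: "\<forall>x y. q(x+y) = q x + q y + b' x y"
    by (auto simp: companion_def)
  have sym: "\<And>u v. b' u v = b' v u" and sc: "\<And>a u v. b' (smult a u) v = a * b' u v"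
    using sb unfolding symmetric_bilinear_def by auto
  have "b' (smult a x) (smult c y) = a * b' x (smult c y)" using sc by simp
  also have "b' x (smult c y) = c * b' x y" using sym sc by metis
  finally have e: "b' (smult a x) (smult c y) = a*c*b' x y" by (simp add: mult.assoc)
  show ?thesis using add Q e by simp
qed

lemma b_exp:
  assumes sb: "symmetric_bilinear smult b"
  shows "b (smult a x + smult c y) (smult a' x + smult c' y)
     = a*a'*b x x + a*c'*b x y + c*a'*b x y + c*c'*b y y"
proof -
  have sym: "\<And>u v. b u v = b v u" and ad: "\<And>u u' v. b (u + u') v = b u v + b u' v"
    and sc: "\<And>a u v. b (smult a u) v = a * b u v"
    using sb unfolding symmetric_bilinear_def by auto
  have r: "\<And>z. b z (smult a' x + smult c' y) = a' * b x z + c' * b y z"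
    using sym ad sc by metis
  have "b (smult a x + smult c y) (smult a' x + smult c' y)
      = a * b x (smult a' x + smult c' y) + c * b y (smult a' x + smult c' y)" using ad sc by simp
  also have "\<dots> = a*(a'*b x x + c'*b y x) + c*(a'*b x y + c'*b y y)" using r by simp
  also have "\<dots> = a*a'*b x x + a*c'*b x y + c*a'*b x y + c*c'*b y y"
    using sym[of y x] by (simp add: distrib_left ac_simps)
  finally show ?thesis .
qed

context tssf begin

lemma bxx_le:
  assumes V: "semimodule smult" and C: "companion smult q b" and Q: "\<forall>a x. q (smult a x) = (a::'a)^2 * q x"
  shows "ghost_le (ee*b x x) (ee*q x)"
proof -
  have "smult (1+1) x = x + x" using V unfolding semimodule_def by metis
  then have "q (x + x) = (1+1)^2 * q x" using Q by metis
  also have "(1+1)^2 = (ee::'a)" using ee_idem by (simp add: ee_def power2_eq_square)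
  finally have e1: "q (x+x) = ee * q x" .
  have "q (x+x) = q x + q x + b x x" using C unfolding companion_def by blast
  also have "q x + q x = ee * q x" using sup(3) by blast
  finally have "ee * q x + b x x = ee * q x" using e1 by simp
  then have "ee*(ee*q x + b x x) = ee*(ee * q x)" by simp
  then have "ee*b x x + ee*q x = ee*q x"
    by (simp add: distrib_left mult.assoc[symmetric] ee_idem add.commute)
  then show ?thesis unfolding ghost_le_def .
qed

lemma lt_c0_le:
  assumes c0: "least_above_e c0" and me: "(m::'a) \<in> eR" and we: "w \<in> eR" and l: "lt w (c0*m)"
  shows "ghost_le w m"
proof (rule ccontr)
  assume "\<not> ghost_le w m"
  then have l2: "lt m w" using not_le[OF we me] by blast
  have "m \<noteq> 0"
  proof
    assume "m = 0" then have "lt w 0" using l by simp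
    then show False using lt_nz by blast
  qed
  then have mg: "m \<in> ghost" using me ghost_iff by simp
  have "ghost_le (c0*m) w" using disc_step[OF c0 mg we l2] .
  then show False using lt_not_le[OF l] by blast
qed

end



theorem theorem1p5:
  fixes smult :: "'a::comm_semiring_1 \<Rightarrow> 'v::comm_monoid_add \<Rightarrow> 'v"
    and q :: "'v \<Rightarrow> 'a" and b :: "'v \<Rightarrow> 'v \<Rightarrow> 'a" and x y :: 'v
  assumes R: "tangible_supersemifield TYPE('a)"
    and nontriv: "nontrivial_ssf TYPE('a)"
    and V: "semimodule smult"
    and qb: "quadratic_pair smult q b"
  shows
    "(dense_ssf TYPE('a) \<longrightarrow>
        (quasilinear_on q (span2 smult x y) \<longleftrightarrow> nu_le ((b x y)^2) (q x * q y)) \<and>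
        (\<not> nu_le ((b x y)^2) (q x * q y) \<longrightarrow> rigid_at smult q x y)) \<and>
     (\<forall>pi pinv :: 'a. discrete_ssf TYPE('a) \<and> pi \<in> tang \<and> pi * pinv = 1 \<and>
                     least_above_e (ee * pinv) \<longrightarrow>
        ((nu_lt ((b x y)^2) (pinv * q x * q y) \<or>
          (q x \<in> eR \<and> q y \<in> eR \<and> nu_eq ((b x y)^2) (pinv * q x * q y)))
            \<longrightarrow> quasilinear_on q (span2 smult x y)) \<and>
        (\<not> nu_lt ((b x y)^2) (pinv * q x * q y) \<and>
         \<not> (q x \<in> eR \<and> q y \<in> eR \<and> nu_eq ((b x y)^2) (pinv * q x * q y))
            \<longrightarrow> nu_rigid_at smult q x y) \<and>
        (nu_lt (pinv * q x * q y) ((b x y)^2) \<longrightarrow> rigid_at smult q x y))"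
proof -
  interpret tssf "TYPE('a)" using R by unfold_locales
  from qb have QF: "quadratic_form smult q" and CB: "companion smult q b"
    unfolding quadratic_pair_def by auto
  from QF have Q: "\<forall>a x. q (smult a x) = a^2 * q x" unfolding quadratic_form_def by auto
  have one: "\<And>v. smult 1 v = v" and zero: "\<And>v. smult 0 v = 0" using V unfolding semimodule_def by auto
  have Fx: "q (x + smult c y) = q x + c^2*q y + c*b' x y" if C: "companion smult q b'" for b' c
  proof -
    have "q (smult 1 x + smult c y) = 1^2*q x + c^2*q y + 1*c*b' x y" by (rule q_lin[OF C Q])
    then show ?thesis using one by simp
  qed
  have Fy: "q (y + smult c x) = q y + c^2*q x + c*b' x y" if C: "companion smult q b'" for b' c
  proof -
    have "q (smult 1 y + smult c x) = 1^2*q y + c^2*q x + 1*c*b' y x" by (rule q_lin[OF C Q])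
    moreover have "b' y x = b' x y" using C unfolding companion_def symmetric_bilinear_def by auto
    ultimately show ?thesis using one by simp
  qed
  have Id: "\<forall>c. q x + c^2*q y + c*b1 x y = q x + c^2*q y + c*b2 x y"
    if "companion smult q b1" "companion smult q b2" for b1 b2
    using Fx[OF that(1)] Fx[OF that(2)] by metis
  have IdY: "\<forall>c. q y + c^2*q x + c*b1 x y = q y + c^2*q x + c*b2 x y"
    if "companion smult q b1" "companion smult q b2" for b1 b2
    using Fy[OF that(1)] Fy[OF that(2)] by metis
  have hx: "ghost_le (ee*b x x) (ee*q x)" using bxx_le[OF V CB Q] .
  have hy: "ghost_le (ee*b y y) (ee*q y)" using bxx_le[OF V CB Q] .
  have QL: "quasilinear_on q (span2 smult x y)"
    if H: "ghost_le (ee*(b x y*b x y)) (ee*(q x*q y)) \<or>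
            (least_above_e c0 \<and> q x \<in> eR \<and> q y \<in> eR \<and> ee*(b x y*b x y) = c0*(ee*(q x*q y)))" for c0
    unfolding quasilinear_on_def span2_def
  proof (intro ballI)
    fix u v assume "u \<in> {smult a x + smult c y |a c. True}" "v \<in> {smult a x + smult c y |a c. True}"
    then obtain a c a' c' where u: "u = smult a x + smult c y" and v: "v = smult a' x + smult c' y" by blast
    have "q (u+v) = q u + q v + b u v" using CB unfolding companion_def by blast
    also have "q u = a^2*q x + c^2*q y + a*c*b x y" using q_lin[OF CB Q] u by simp
    also have "q v = a'^2*q x + c'^2*q y + a'*c'*b x y" using q_lin[OF CB Q] v by simp
    also have "b u v = a*a'*b x x + a*c'*b x y + c*a'*b x y + c*c'*b y y"
      using b_exp[of smult b] CB u v unfolding companion_def by simp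
    also have "(a^2*q x + c^2*q y + a*c*b x y) + (a'^2*q x + c'^2*q y + a'*c'*b x y)
          + (a*a'*b x x + a*c'*b x y + c*a'*b x y + c*c'*b y y)
       = (a^2*q x + c^2*q y + a*c*b x y) + (a'^2*q x + c'^2*q y + a'*c'*b x y)"
      by (rule ql_core[OF hx hy H])
    also have "\<dots> = q u + q v" using q_lin[OF CB Q] u v by simp
    finally show "q (u + v) = q u + q v" .
  qed
  have NQR: "\<not> quasilinear_on q (span2 smult x y) \<and> rigid_at smult q x y"
    if gg: "ee*b x y \<in> ghost"
      and W: "\<exists>w\<in>ghost. lt (ee*q x) (w*(ee*b x y)) \<and> lt (w*(ee*q y)) (ee*b x y)"
  proof -
    obtain w where w: "w \<in> ghost" "lt (ee*q x) (w*(ee*b x y))" "lt (w*(ee*q y)) (ee*b x y)"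
      using W by blast
    obtain c s where cs: "s*c = 1" "lt (ee*q x) (ee*(c*b x y))" "lt (ee*(c^2*q y)) (ee*(c*b x y))"
      using choose_c[OF gg w] by blast
    have nq: "\<not> quasilinear_on q (span2 smult x y)"
    proof
      assume ql: "quasilinear_on q (span2 smult x y)"
      have "x = smult 1 x + smult 0 y" using one zero by simp
      then have xs: "x \<in> span2 smult x y" unfolding span2_def by blast
      have "smult c y = smult 0 x + smult c y" using zero by simp
      then have ys: "smult c y \<in> span2 smult x y" unfolding span2_def by blast
      have "q (x + smult c y) = q x + q (smult c y)" using ql xs ys unfolding quasilinear_on_def by blast
      then have "q x + c^2*q y + c*b x y = q x + c^2*q y" using Fx[OF CB] Q by simp
      then show False using nq_core[OF cs(2,3)] by blast
    qed
    have rg: "rigid_at smult q x y" unfolding rigid_at_def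
    proof (intro allI impI)
      fix b1 b2 assume "companion smult q b1 \<and> companion smult q b2"
      then have c1: "companion smult q b1" and c2: "companion smult q b2" by auto
      have "b1 x y = b x y" using rigid_core[OF cs] Id[OF CB c1] by blast
      moreover have "b2 x y = b x y" using rigid_core[OF cs] Id[OF CB c2] by blast
      ultimately show "b1 x y = b2 x y" by simp
    qed
    show ?thesis using nq rg by blast
  qed
  have NM1: "ee*(b x y*b x y) = (ee*b x y)*(ee*b x y)" by (rule N_mult)
  have NM2: "ee*(q x*q y) = (ee*q x)*(ee*q y)" by (rule N_mult)
  have gnz: "ee*b x y \<in> ghost" if "lt z (ee*(b x y*b x y))" for z
  proof -
    have "b x y \<noteq> 0" using that lt_nz by fastforce
    then show ?thesis using N_ghost by blast
  qed
  have partA: "dense_ssf TYPE('a) \<longrightarrow>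
        (quasilinear_on q (span2 smult x y) \<longleftrightarrow> nu_le ((b x y)^2) (q x * q y)) \<and>
        (\<not> nu_le ((b x y)^2) (q x * q y) \<longrightarrow> rigid_at smult q x y)"
  proof (intro impI)
    assume d: "dense_ssf TYPE('a)"
    have neg: "\<not> quasilinear_on q (span2 smult x y) \<and> rigid_at smult q x y"
      if nle: "\<not> nu_le ((b x y)^2) (q x * q y)"
    proof -
      have l: "lt (ee*(q x*q y)) (ee*(b x y*b x y))"
        using nle not_le[OF N_eR N_eR] unfolding nu_le_def power2_eq_square by blast
      have gg: "ee*b x y \<in> ghost" using gnz[OF l] .
      have "lt ((ee*q x)*(ee*q y)) ((ee*b x y)*(ee*b x y))" using l NM1 NM2 by simp
      then have "\<exists>w\<in>ghost. lt (ee*q x) (w*(ee*b x y)) \<and> lt (w*(ee*q y)) (ee*b x y)"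
        using choose_w[OF gg N_eR N_eR nontriv] d by blast
      then show ?thesis using NQR[OF gg] by blast
    qed
    have pos: "quasilinear_on q (span2 smult x y)" if "nu_le ((b x y)^2) (q x * q y)"
      using QL that unfolding nu_le_def power2_eq_square by blast
    show "(quasilinear_on q (span2 smult x y) \<longleftrightarrow> nu_le ((b x y)^2) (q x * q y)) \<and>
        (\<not> nu_le ((b x y)^2) (q x * q y) \<longrightarrow> rigid_at smult q x y)"
      using neg pos by blast
  qed
  have partB: "\<forall>pi pinv :: 'a. discrete_ssf TYPE('a) \<and> pi \<in> tang \<and> pi * pinv = 1 \<and>
                     least_above_e (ee * pinv) \<longrightarrow>
        ((nu_lt ((b x y)^2) (pinv * q x * q y) \<or>
          (q x \<in> eR \<and> q y \<in> eR \<and> nu_eq ((b x y)^2) (pinv * q x * q y)))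
            \<longrightarrow> quasilinear_on q (span2 smult x y)) \<and>
        (\<not> nu_lt ((b x y)^2) (pinv * q x * q y) \<and>
         \<not> (q x \<in> eR \<and> q y \<in> eR \<and> nu_eq ((b x y)^2) (pinv * q x * q y))
            \<longrightarrow> nu_rigid_at smult q x y) \<and>
        (nu_lt (pinv * q x * q y) ((b x y)^2) \<longrightarrow> rigid_at smult q x y)"
  proof (intro allI impI)
    fix pi pinv :: 'a
    assume "discrete_ssf TYPE('a) \<and> pi \<in> tang \<and> pi * pinv = 1 \<and> least_above_e (ee * pinv)"
    then have c0: "least_above_e (ee*pinv)" by blast
    define c0 where "c0 = ee*pinv"
    have c0l: "least_above_e c0" using c0 c0_def by simp
    have NP: "ee*(pinv * q x * q y) = c0*(ee*(q x*q y))"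
      unfolding c0_def using N_mult[of pinv "q x * q y"] by (simp add: mult.assoc)
    have b1: "quasilinear_on q (span2 smult x y)"
      if "nu_lt ((b x y)^2) (pinv * q x * q y) \<or>
          (q x \<in> eR \<and> q y \<in> eR \<and> nu_eq ((b x y)^2) (pinv * q x * q y))"
    proof -
      from that consider "lt (ee*(b x y*b x y)) (c0*(ee*(q x*q y)))"
        | "q x \<in> eR \<and> q y \<in> eR \<and> ee*(b x y*b x y) = c0*(ee*(q x*q y))"
        unfolding nu_lt_def nu_eq_def lt_def NP power2_eq_square by blast
      then show ?thesis
      proof cases
        case 1
        then have "ghost_le (ee*(b x y*b x y)) (ee*(q x*q y))" using lt_c0_le[OF c0l N_eR N_eR] by blast
        then show ?thesis using QL by blast
      next
        case 2
        then show ?thesis using QL[of c0] c0l by blast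
      qed
    qed
    have b3: "rigid_at smult q x y" if "lt (c0*(ee*(q x*q y))) (ee*(b x y*b x y))"
    proof -
      have gg: "ee*b x y \<in> ghost" using gnz[OF that] .
      have "lt (c0*((ee*q x)*(ee*q y))) ((ee*b x y)*(ee*b x y))" using that NM1 NM2 by simp
      then have "\<exists>w\<in>ghost. lt (ee*q x) (w*(ee*b x y)) \<and> lt (w*(ee*q y)) (ee*b x y)"
        using choose_w[OF gg N_eR N_eR nontriv] c0l by blast
      then show ?thesis using NQR[OF gg] by blast
    qed
    have b2: "nu_rigid_at smult q x y"
      if n1: "\<not> nu_lt ((b x y)^2) (pinv * q x * q y)"
        and n2: "\<not> (q x \<in> eR \<and> q y \<in> eR \<and> nu_eq ((b x y)^2) (pinv * q x * q y))"
    proof (cases "lt (c0*(ee*(q x*q y))) (ee*(b x y*b x y))")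
      case True
      then show ?thesis using b3 unfolding rigid_at_def nu_rigid_at_def by metis
    next
      case False
      have ce: "c0*(ee*(q x*q y)) \<in> eR" using eR_mult2[OF N_eR] .
      have nl: "\<not> lt (ee*(b x y*b x y)) (c0*(ee*(q x*q y)))"
        using n1 unfolding nu_lt_def lt_def NP power2_eq_square .
      have E: "ee*(b x y*b x y) = c0*(ee*(q x*q y))"
        using not_lt[OF N_eR ce nl] not_lt[OF ce N_eR False] le_antisym by blast
      have tg: "q x \<notin> eR \<or> q y \<notin> eR" using n2 E unfolding nu_eq_def NP power2_eq_square by blast
      have E1: "(ee*b x y)*(ee*b x y) = c0*((ee*q x)*(ee*q y))" using E NM1 NM2 by simp
      have E2: "(ee*b x y)*(ee*b x y) = c0*((ee*q y)*(ee*q x))" using E1 by (simp add: mult.commute)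
      have key: "ee*b' x y = ee*b x y" if cb: "companion smult q b'" for b'
        using tg
      proof
        assume "q x \<notin> eR"
        then show ?thesis using nu_core[OF c0l _ E1 Id[OF CB cb]] by blast
      next
        assume "q y \<notin> eR"
        then show ?thesis using nu_core[OF c0l _ E2 IdY[OF CB cb]] by blast
      qed
      show ?thesis unfolding nu_rigid_at_def using key by metis
    qed
    show "((nu_lt ((b x y)^2) (pinv * q x * q y) \<or>
          (q x \<in> eR \<and> q y \<in> eR \<and> nu_eq ((b x y)^2) (pinv * q x * q y)))
            \<longrightarrow> quasilinear_on q (span2 smult x y)) \<and>
        (\<not> nu_lt ((b x y)^2) (pinv * q x * q y) \<and>
         \<not> (q x \<in> eR \<and> q y \<in> eR \<and> nu_eq ((b x y)^2) (pinv * q x * q y))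
            \<longrightarrow> nu_rigid_at smult q x y) \<and>
        (nu_lt (pinv * q x * q y) ((b x y)^2) \<longrightarrow> rigid_at smult q x y)"
    proof (intro conjI impI)
      show "quasilinear_on q (span2 smult x y)" if "nu_lt ((b x y)^2) (pinv * q x * q y) \<or>
          (q x \<in> eR \<and> q y \<in> eR \<and> nu_eq ((b x y)^2) (pinv * q x * q y))" using b1 that .
      show "nu_rigid_at smult q x y" if "\<not> nu_lt ((b x y)^2) (pinv * q x * q y) \<and>
         \<not> (q x \<in> eR \<and> q y \<in> eR \<and> nu_eq ((b x y)^2) (pinv * q x * q y))" using b2 that by blast
      show "rigid_at smult q x y" if "nu_lt (pinv * q x * q y) ((b x y)^2)"
        using b3 that unfolding nu_lt_def lt_def NP power2_eq_square by blast
    qed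
  qed
  show ?thesis using partA partB by blast
qed


end
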